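(* For every finite loopless graph $G$ (multiple edges allowed), $\nu_2(G) \geq \frac{2}{3}\cdot \nu_3(G)$.
   Context: For an integer $k\geq 1$ and a graph $G$, $\nu_k(G)$ denotes the maximum number of edges of a $k$-edge-colorable subgraph of $G$ (a subgraph whose edges can be colored with $k$ colors so that adjacent edges receive different colors). *)

theory Defs
  imports Complex_Main
begin

text \<open>A finite loopless multigraph: finite vertex set V, finite edge set E
  (edges are abstract labels, so parallel edges are allowed), and an incidence
  map ends assigning to each edge its set of exactly two distinct endpoints in V.\<close>

definition loopless_multigraph :: "'v set \<Rightarrow> 'e set \<Rightarrow> ('e \<Rightarrow> 'v set) \<Rightarrow> bool" where
  "loopless_multigraph V E ends \<longleftrightarrow>
     finite V \<and> finite E \<and> (\<forall>e\<in>E. ends e \<subseteq> V \<and> card (ends e) = 2)"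

definition k_edge_colorable :: "nat \<Rightarrow> ('e \<Rightarrow> 'v set) \<Rightarrow> 'e set \<Rightarrow> bool" where
  "k_edge_colorable k ends F \<longleftrightarrow>
     (\<exists>c :: 'e \<Rightarrow> nat. (\<forall>e\<in>F. c e < k) \<and>
        (\<forall>e\<in>F. \<forall>f\<in>F. e \<noteq> f \<and> ends e \<inter> ends f \<noteq> {} \<longrightarrow> c e \<noteq> c f))"

text \<open>nu_k(G): maximum number of edges of a k-edge-colorable subgraph
  (the number of edges of a subgraph depends only on its edge set).\<close>

definition nu :: "nat \<Rightarrow> 'e set \<Rightarrow> ('e \<Rightarrow> 'v set) \<Rightarrow> nat" where
  "nu k E ends = Max {card F | F. F \<subseteq> E \<and> k_edge_colorable k ends F}"

end

theory Submission
  imports Defs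
begin

lemma nu_fin: "finite E \<Longrightarrow> finite {card F | F. F \<subseteq> E \<and> k_edge_colorable k ends F}"
  by (rule finite_subset[of _ "{0..card E}"]) (auto intro: card_mono)

lemma nu_ge: "finite E \<Longrightarrow> F \<subseteq> E \<Longrightarrow> k_edge_colorable k ends F \<Longrightarrow> card F \<le> nu k E ends"
  unfolding nu_def by (rule Max_ge[OF nu_fin]) auto

lemma nu_attained: "finite E \<Longrightarrow> \<exists>F. F \<subseteq> E \<and> k_edge_colorable k ends F \<and> nu k E ends = card F"
proof -
  assume f: "finite E"
  have "{} \<subseteq> E \<and> k_edge_colorable k ends {}" by (auto simp: k_edge_colorable_def)
  hence ne: "{card F | F. F \<subseteq> E \<and> k_edge_colorable k ends F} \<noteq> {}" by blast
  show ?thesis unfolding nu_def using Max_in[OF nu_fin[OF f] ne] by auto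
qed

lemma split_card: "finite F \<Longrightarrow> card {e\<in>F. c e \<noteq> (i::nat)} + card {e\<in>F. c e = i} = card F"
proof -
  assume f: "finite F"
  have "F = {e\<in>F. c e \<noteq> i} \<union> {e\<in>F. c e = i}" by auto
  hence "card F = card ({e\<in>F. c e \<noteq> i} \<union> {e\<in>F. c e = i})" by simp
  also have "\<dots> = card {e\<in>F. c e \<noteq> i} + card {e\<in>F. c e = i}"
    by (rule card_Un_disjoint) (use f in auto)
  finally show ?thesis by simp
qed

lemma three_card: "finite F \<Longrightarrow> \<forall>e\<in>F. c e < (3::nat) \<Longrightarrow>
   card {e\<in>F. c e = 0} + card {e\<in>F. c e = 1} + card {e\<in>F. c e = 2} = card F"
proof -
  assume f: "finite F" and c: "\<forall>e\<in>F. c e < (3::nat)"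
  have "{e\<in>F. c e \<noteq> 0} = {e\<in>F. c e = 1} \<union> {e\<in>F. c e = 2}" using c by auto
  hence "card {e\<in>F. c e \<noteq> 0} = card {e\<in>F. c e = 1} + card {e\<in>F. c e = 2}"
    using f by (simp add: card_Un_disjoint disjoint_iff)
  with split_card[OF f, of c 0] show ?thesis by simp
qed

theorem proposition1:
  fixes V :: "'v set" and E :: "'e set" and ends :: "'e \<Rightarrow> 'v set"
  assumes "loopless_multigraph V E ends"
  shows "real (nu 2 E ends) \<ge> 2 / 3 * real (nu 3 E ends)"
proof -
  have fE: "finite E" using assms by (simp add: loopless_multigraph_def)
  obtain F where F: "F \<subseteq> E" "k_edge_colorable 3 ends F" "nu 3 E ends = card F"
    using nu_attained[OF fE] by blast
  have fF: "finite F" using F(1) fE finite_subset by blast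
  obtain c :: "'e \<Rightarrow> nat" where c: "\<forall>e\<in>F. c e < 3"
    "\<forall>e\<in>F. \<forall>f\<in>F. e \<noteq> f \<and> ends e \<inter> ends f \<noteq> {} \<longrightarrow> c e \<noteq> c f"
    using F(2) unfolding k_edge_colorable_def by blast
  have col: "k_edge_colorable 2 ends {e\<in>F. c e \<noteq> i}" if "i < 3" for i
    unfolding k_edge_colorable_def
  proof (intro exI[of _ "\<lambda>e. if c e = 2 then i else c e"] conjI ballI impI)
    fix e assume "e \<in> {e\<in>F. c e \<noteq> i}"
    then show "(if c e = 2 then i else c e) < 2" using c(1) that by auto
  next
    fix e f assume e: "e \<in> {e\<in>F. c e \<noteq> i}" and f: "f \<in> {e\<in>F. c e \<noteq> i}"
      and h: "e \<noteq> f \<and> ends e \<inter> ends f \<noteq> {}"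
    have "c e \<noteq> c f" using c(2) e f h by auto
    then show "(if c e = 2 then i else c e) \<noteq> (if c f = 2 then i else c f)"
      using e f c(1) that by auto
  qed
  have bnd: "card {e\<in>F. c e \<noteq> i} \<le> nu 2 E ends" if "i < 3" for i
    using nu_ge[OF fE _ col[OF that]] F(1) by auto
  have s: "card {e\<in>F. c e \<noteq> i} + card {e\<in>F. c e = i} = card F" for i
    using split_card[OF fF] .
  note t = three_card[OF fF c(1)]
  have "3 * nu 2 E ends \<ge> 2 * card F"
    using bnd[of 0] bnd[of 1] bnd[of 2] s[of 0] s[of 1] s[of 2] t by linarith
  hence "real (3 * nu 2 E ends) \<ge> real (2 * card F)" by linarith
  thus ?thesis using F(3) by simp
qed

end
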